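(* For a positive integer $n$, the set $A_n$ equals the set of positive divisors of $n$ if and only if $n\in\{1,2,4,6,12\}$.
   Context: A walk is a finite sequence $z_0,\dots,z_l$ of Gaussian integers with $|z_{j+1}-z_j|=1$. For natural numbers $n,d$, $n$ is $d$-avoidable if there exist a walk $(z_j)$ and indices $r,s$ with $z_r-z_s=n$ such that $z_t-z_u\neq d$ for all indices $t,u$. $A_n$ is the set of all $d\in\mathbb{N}$ such that $n$ is not $d$-avoidable. *)

theory Defs
  imports Main
begin

text \<open>Gaussian integers are represented as pairs (a,b) of integers, standing for a + b i.\<close>

type_synonym gint = "int \<times> int"

definition gdiff :: "gint \<Rightarrow> gint \<Rightarrow> gint" where
  "gdiff z w = (fst z - fst w, snd z - snd w)"

definition unit_step :: "gint \<Rightarrow> gint \<Rightarrow> bool" where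
  "unit_step z w \<longleftrightarrow> (fst (gdiff w z))^2 + (snd (gdiff w z))^2 = 1"

definition is_walk :: "gint list \<Rightarrow> bool" where
  "is_walk zs \<longleftrightarrow> zs \<noteq> [] \<and> (\<forall>j. Suc j < length zs \<longrightarrow> unit_step (zs ! j) (zs ! Suc j))"

definition avoidable :: "nat \<Rightarrow> nat \<Rightarrow> bool" where
  "avoidable n d \<longleftrightarrow> (\<exists>zs r s. is_walk zs \<and> r < length zs \<and> s < length zs
     \<and> gdiff (zs ! r) (zs ! s) = (int n, 0)
     \<and> (\<forall>t u. t < length zs \<longrightarrow> u < length zs \<longrightarrow> gdiff (zs ! t) (zs ! u) \<noteq> (int d, 0)))"

definition A :: "nat \<Rightarrow> nat set" where
  "A n = {d. d \<ge> 1 \<and> \<not> avoidable n d}"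

end

theory Submission
  imports Defs
begin

lemma sq1_int: "(a::int)^2 + b^2 = 1 \<longleftrightarrow> (a = 1 \<and> b = 0) \<or> (a = -1 \<and> b = 0) \<or> (a = 0 \<and> b = 1) \<or> (a = 0 \<and> b = -1)"
proof
  assume h: "a^2 + b^2 = 1"
  have a2: "a^2 \<le> 1" using h by (smt (verit) zero_le_power2)
  have b2: "b^2 \<le> 1" using h by (smt (verit) zero_le_power2)
  have "\<bar>a\<bar> \<le> 1" using a2 by (metis abs_le_square_iff abs_one power_one)
  moreover have "\<bar>b\<bar> \<le> 1" using b2 by (metis abs_le_square_iff abs_one power_one)
  ultimately have "a \<in> {-1,0,1}" "b \<in> {-1,0,1}" by auto
  then show "(a = 1 \<and> b = 0) \<or> (a = -1 \<and> b = 0) \<or> (a = 0 \<and> b = 1) \<or> (a = 0 \<and> b = -1)"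
    using h by auto
qed auto

lemma unit_step_iff: "unit_step p q \<longleftrightarrow>
   (fst q = fst p + 1 \<and> snd q = snd p) \<or> (fst q = fst p - 1 \<and> snd q = snd p) \<or>
   (fst q = fst p \<and> snd q = snd p + 1) \<or> (fst q = fst p \<and> snd q = snd p - 1)"
  unfolding unit_step_def gdiff_def by (simp add: sq1_int) arith

lemma sum_int_tele: "(a::int) \<le> b \<Longrightarrow> (\<Sum>q\<in>{a..<b}. f (q+1) - f q) = (f b - f a :: int)"
proof (induction b rule: int_ge_induct)
  case base then show ?case by simp
next
  case (step b)
  have "{a..<b+1} = insert b {a..<b}" using step by auto
  then show ?case using step by simp
qed

definition ind :: "bool \<Rightarrow> int" where "ind b = (if b then 1 else 0)"

locale pwalk =
  fixes Y :: "int \<Rightarrow> int \<times> int" and L M :: int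
  assumes L_pos: "L > 0" and M_pos: "M > 0"
    and stp: "\<And>q. unit_step (Y q) (Y (q+1))"
    and per: "\<And>q. Y (q + L) = (fst (Y q) + M, snd (Y q))"
begin

abbreviation X where "X q \<equiv> fst (Y q)"
abbreviation H where "H q \<equiv> snd (Y q)"

lemma stp': "(X (q+1) = X q + 1 \<and> H (q+1) = H q) \<or> (X (q+1) = X q - 1 \<and> H (q+1) = H q) \<or>
   (X (q+1) = X q \<and> H (q+1) = H q + 1) \<or> (X (q+1) = X q \<and> H (q+1) = H q - 1)"
  using stp[of q] unfolding unit_step_iff .

lemma per_nat: "Y (q + int t * L) = (X q + int t * M, H q)"
proof (induction t)
  case 0 then show ?case by simp
next
  case (Suc t)
  have "q + int (Suc t) * L = (q + int t * L) + L" by (simp add: algebra_simps)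
  then show ?case using per[of "q + int t * L"] Suc by (simp add: algebra_simps)
qed

lemma per_int: "Y (q + t * L) = (X q + t * M, H q)"
proof (cases "t \<ge> 0")
  case True
  then obtain n where "t = int n" by (metis nonneg_int_cases)
  then show ?thesis using per_nat by simp
next
  case False
  define n where "n = nat (-t)"
  have n: "t = - int n" using False n_def by simp
  have "Y ((q + t * L) + int n * L) = (X (q + t*L) + int n * M, H (q + t*L))" by (rule per_nat)
  moreover have "(q + t * L) + int n * L = q" using n by (simp add: algebra_simps)
  ultimately have "Y q = (X (q + t*L) + int n * M, H (q + t*L))" by simp
  then have "X q = X (q + t*L) + int n * M" "H q = H (q + t*L)" by auto
  then show ?thesis using n by (simp add: prod_eq_iff)
qed

lemma Y_mod: "Y q = (X (q mod L) + (q div L) * M, H (q mod L))"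
proof -
  have "Y (q mod L + (q div L) * L) = (X (q mod L) + (q div L) * M, H (q mod L))" by (rule per_int)
  then show ?thesis by simp
qed

definition C where "C = Max ((\<lambda>r. \<bar>X r\<bar>) ` {0..<L})"

lemma C_bound: "\<bar>X q - (q div L) * M\<bar> \<le> C"
proof -
  have "q mod L \<in> {0..<L}" using L_pos by simp
  then have "\<bar>X (q mod L)\<bar> \<le> C" unfolding C_def by (intro Max_ge) auto
  then show ?thesis using Y_mod[of q] by (metis add_diff_cancel_right' fst_conv)
qed

lemma C_nonneg: "C \<ge> 0" using C_bound[of 0] by linarith

definition T :: "int \<Rightarrow> int" where "T x = L * (\<bar>x\<bar> + C + 3)"

lemma T_pos: "T x > 0" unfolding T_def using L_pos C_nonneg by simp

lemma far_right: assumes "q \<ge> T x" shows "X q > x + 2"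
proof -
  have "L * (\<bar>x\<bar> + C + 3) \<le> q" using assms T_def by simp
  then have "(L * (\<bar>x\<bar> + C + 3)) div L \<le> q div L" using L_pos by (intro zdiv_mono1) auto
  then have d: "q div L \<ge> \<bar>x\<bar> + C + 3" using L_pos by simp
  then have "(q div L) * 1 \<le> (q div L) * M" using M_pos C_nonneg by (intro mult_left_mono) auto
  then show ?thesis using C_bound[of q] d by linarith
qed

lemma far_left: assumes "q \<le> - T x" shows "X q < x - 2"
proof -
  have "q \<le> L * (- (\<bar>x\<bar> + C + 3))" using assms unfolding T_def by (simp add: algebra_simps)
  then have "q div L \<le> (L * (- (\<bar>x\<bar> + C + 3))) div L" using L_pos by (intro zdiv_mono1) auto
  then have d: "q div L \<le> - (\<bar>x\<bar> + C + 3)" using L_pos by simp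
  then have "(q div L) * M \<le> (q div L) * 1" using M_pos C_nonneg
    by (intro mult_left_mono_neg) auto
  then show ?thesis using C_bound[of q] d by linarith
qed

end

context pwalk begin

definition eps :: "int \<Rightarrow> int \<Rightarrow> int" where
  "eps x q = (if X q = x \<and> X (q+1) = x+1 then 1 else if X q = x+1 \<and> X (q+1) = x then -1 else 0)"

lemma eps_tele: "eps x q = ind (X (q+1) > x) - ind (X q > x)"
  using stp'[of q] unfolding eps_def ind_def by auto

lemma eps_far: assumes "q \<ge> T x \<or> q < - T x" shows "eps x q = 0"
proof -
  have "X q > x + 2 \<or> X q < x - 2" using assms far_right[of x q] far_left[of q x] by force
  then show ?thesis unfolding eps_def by auto
qed

lemma win_sum: assumes "a \<le> - T x" "b \<ge> T x"
  shows "(\<Sum>q\<in>{a..<b}. eps x q * f q) = (\<Sum>q\<in>{-T x..<T x}. eps x q * f q)"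
proof (rule sum.mono_neutral_right)
  show "finite {a..<b}" by simp
  show "{- T x..<T x} \<subseteq> {a..<b}" using assms by auto
  show "\<forall>i\<in>{a..<b} - {- T x..<T x}. eps x i * f i = 0"
    using eps_far by auto
qed

lemma net: "(\<Sum>q\<in>{-T x..<T x}. eps x q) = 1"
proof -
  have "(\<Sum>q\<in>{-T x..<T x}. eps x q) = (\<Sum>q\<in>{-T x..<T x}. ind (X (q+1) > x) - ind (X q > x))"
    using eps_tele by simp
  also have "\<dots> = ind (X (T x) > x) - ind (X (- T x) > x)"
    using T_pos[of x] by (intro sum_int_tele) auto
  also have "\<dots> = 1" using far_right[of x "T x"] far_left[of "- T x" x] unfolding ind_def by auto
  finally show ?thesis .
qed

definition kap :: "int \<Rightarrow> int \<Rightarrow> int" where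
  "kap x h = (\<Sum>q\<in>{-T x..<T x}. eps x q * ind (H q > h))"

lemma left_end: assumes "eps x q \<noteq> 0" shows "(x, H q) \<in> range Y"
proof (cases "X q = x")
  case True
  then have "Y q = (x, H q)" by (simp add: prod_eq_iff)
  then show ?thesis by (metis rangeI)
next
  case False
  then have "X (q+1) = x" "X q = x + 1" using assms unfolding eps_def by (auto split: if_splits)
  then have "H (q+1) = H q" using stp'[of q] by auto
  then have "Y (q+1) = (x, H q)" using \<open>X (q+1) = x\<close> by (simp add: prod_eq_iff)
  then show ?thesis by (metis rangeI)
qed

lemma kap_up: assumes "(x, h+1) \<notin> range Y" shows "kap x h = kap x (h+1)"
  unfolding kap_def
proof (rule sum.cong[OF refl])
  fix q
  show "eps x q * ind (h < H q) = eps x q * ind (h + 1 < H q)"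
  proof (cases "eps x q = 0")
    case False
    then have "H q \<noteq> h + 1" using left_end[of x q] assms by auto
    then show ?thesis unfolding ind_def by auto
  qed simp
qed

lemma step_flux:
  assumes "(x+1, h) \<notin> range Y"
  shows "ind (X (q+1) = x+1 \<and> H (q+1) > h) - ind (X q = x+1 \<and> H q > h)
        = eps x q * ind (H q > h) - eps (x+1) q * ind (H q > h)"
proof -
  have a: "Y q \<noteq> (x+1, h)" "Y (q+1) \<noteq> (x+1, h)" using assms by (metis rangeI)+
  have a1: "\<not> (X q = x+1 \<and> H q = h)" using a(1) by (metis prod.collapse)
  have a2: "\<not> (X (q+1) = x+1 \<and> H (q+1) = h)" using a(2) by (metis prod.collapse)
  show ?thesis using stp'[of q] a1 a2 unfolding eps_def ind_def by auto
qed

lemma kap_right: assumes "(x+1, h) \<notin> range Y" shows "kap x h = kap (x+1) h"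
proof -
  define T' where "T' = max (T x) (T (x+1))"
  have T'1: "T' \<ge> T x" "T' \<ge> T (x+1)" unfolding T'_def by auto
  have T'p: "T' > 0" using T_pos[of x] T'1 by linarith
  let ?f = "\<lambda>q. ind (X q = x+1 \<and> H q > h)"
  have "(\<Sum>q\<in>{-T'..<T'}. ?f (q+1) - ?f q) = ?f T' - ?f (-T')"
    using T'p by (intro sum_int_tele) auto
  also have "\<dots> = 0"
  proof -
    have "X T' > x + 1 + 2" using far_right[of "x+1" T'] T'1 by auto
    moreover have "X (-T') < x - 2" using far_left[of "-T'" x] T'1 by auto
    ultimately show ?thesis unfolding ind_def by auto
  qed
  finally have "(\<Sum>q\<in>{-T'..<T'}. eps x q * ind (H q > h) - eps (x+1) q * ind (H q > h)) = 0"
    using step_flux[OF assms] by simp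
  then have "(\<Sum>q\<in>{-T'..<T'}. eps x q * ind (H q > h)) = (\<Sum>q\<in>{-T'..<T'}. eps (x+1) q * ind (H q > h))"
    by (simp add: sum_subtractf)
  moreover have "(\<Sum>q\<in>{-T'..<T'}. eps x q * ind (H q > h)) = kap x h"
    unfolding kap_def using T'1 by (intro win_sum) auto
  moreover have "(\<Sum>q\<in>{-T'..<T'}. eps (x+1) q * ind (H q > h)) = kap (x+1) h"
    unfolding kap_def using T'1 by (intro win_sum) auto
  ultimately show ?thesis by simp
qed

definition kapP where "kapP p = kap (fst p) (snd p)"

lemma kap_adj: assumes "unit_step p p'" "p \<notin> range Y" "p' \<notin> range Y"
  shows "kapP p = kapP p'"
proof -
  obtain x h where p: "p = (x,h)" by (metis prod.collapse)
  obtain x' h' where p': "p' = (x',h')" by (metis prod.collapse)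
  have "(x' = x + 1 \<and> h' = h) \<or> (x' = x - 1 \<and> h' = h) \<or> (x' = x \<and> h' = h + 1) \<or> (x' = x \<and> h' = h - 1)"
    using assms(1) p p' unfolding unit_step_iff by simp
  then show ?thesis
  proof (elim disjE conjE)
    assume "x' = x + 1" "h' = h"
    then show ?thesis using kap_right[of x h] assms p p' unfolding kapP_def by simp
  next
    assume "x' = x - 1" "h' = h"
    then show ?thesis using kap_right[of "x-1" h] assms p p' unfolding kapP_def by simp
  next
    assume "x' = x" "h' = h + 1"
    then show ?thesis using kap_up[of x h] assms p p' unfolding kapP_def by simp
  next
    assume "x' = x" "h' = h - 1"
    then show ?thesis using kap_up[of x "h-1"] assms p p' unfolding kapP_def by simp
  qed
qed

lemma kap_walk:
  fixes Z :: "int \<Rightarrow> int \<times> int"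
  assumes st: "\<And>q. unit_step (Z q) (Z (q+1))" and av: "\<And>q. Z q \<notin> range Y"
  shows "kapP (Z a) = kapP (Z b)"
proof -
  have *: "kapP (Z a) = kapP (Z b)" if "a \<le> b" for a b
    using that
  proof (induction b rule: int_ge_induct)
    case base then show ?case by simp
  next
    case (step b)
    have "kapP (Z b) = kapP (Z (b+1))" by (rule kap_adj[OF st[of b] av av])
    then show ?case using step.IH by (rule trans[rotated])
  qed
  show ?thesis
  proof (cases "a \<le> b")
    case True then show ?thesis by (rule *)
  next
    case False then have "kapP (Z b) = kapP (Z a)" by (intro *) auto
    then show ?thesis by (rule sym)
  qed
qed

definition Hm where "Hm = Max (H ` {0..<L})"

lemma H_le: "H q \<le> Hm"
proof -
  have "q mod L \<in> {0..<L}" using L_pos by simp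
  then have "H (q mod L) \<le> Hm" unfolding Hm_def by (intro Max_ge) auto
  then show ?thesis using Y_mod[of q] by (metis snd_conv)
qed

lemma Hm_attained: "\<exists>q. H q = Hm"
proof -
  have "Hm \<in> H ` {0..<L}" unfolding Hm_def using L_pos by (intro Max_in) auto
  then show ?thesis by auto
qed

lemma kap_top: "kap x Hm = 0"
proof -
  have "\<And>q. ind (Hm < H q) = 0" using H_le unfolding ind_def by (simp add: not_less)
  then show ?thesis unfolding kap_def by simp
qed

end

lemma periodic_shift:
  assumes PA: "pwalk Y L M"
  shows "\<exists>q1 q2. Y q1 = (fst (Y q2) + s, snd (Y q2))"
proof (rule ccontr)
  assume nex: "\<not> ?thesis"
  define B where "B q = (fst (Y q) + s, snd (Y q))" for q
  interpret A: pwalk Y L M by (rule PA)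
  have PB: "pwalk B L M"
  proof
    show "L > 0" "M > 0" using A.L_pos A.M_pos by auto
    fix q
    show "unit_step (B q) (B (q+1))" using A.stp[of q] unfolding unit_step_iff B_def by auto
    show "B (q + L) = (fst (B q) + M, snd (B q))" using A.per[of q] unfolding B_def by auto
  qed
  interpret B: pwalk B L M by (rule PB)
  have disj: "Y q1 \<noteq> B q2" for q1 q2 using nex unfolding B_def by blast
  have sndB: "snd (B q) = snd (Y q)" for q unfolding B_def by simp
  have HmB: "B.Hm = A.Hm" unfolding A.Hm_def B.Hm_def using sndB by simp
  obtain q0 where q0: "snd (Y q0) = A.Hm" using A.Hm_attained by blast
  have kA: "A.kapP b = 0" if hb: "b \<in> range B" for b
  proof -
    obtain q where q: "b = B q" using hb by (rule rangeE)
    have "A.kapP (B q) = A.kapP (B q0)"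
      by (rule A.kap_walk[where Z=B, OF B.stp]) (metis disj rangeE)
    also have "\<dots> = A.kap (fst (B q0)) A.Hm" unfolding A.kapP_def using q0 sndB by simp
    also have "\<dots> = 0" by (rule A.kap_top)
    finally show ?thesis using q by simp
  qed
  have kB: "B.kapP a = 0" if ha: "a \<in> range Y" for a
  proof -
    obtain q where q: "a = Y q" using ha by (rule rangeE)
    have "B.kapP (Y q) = B.kapP (Y q0)"
      by (rule B.kap_walk) (use A.stp disj in \<open>auto simp: eq_commute\<close>)
    also have "\<dots> = B.kap (fst (Y q0)) B.Hm" unfolding B.kapP_def using q0 HmB by simp
    also have "\<dots> = 0" by (rule B.kap_top)
    finally show ?thesis using q by simp
  qed
  define T0 where "T0 = max (A.T 0) (B.T 0)"
  define W where "W = {-T0..<T0}"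
  have T01: "T0 \<ge> A.T 0" "T0 \<ge> B.T 0" unfolding T0_def by auto
  have kapA: "A.kap 0 h = (\<Sum>q'\<in>W. A.eps 0 q' * ind (snd (Y q') > h))" for h
    unfolding A.kap_def W_def using T01 by (intro A.win_sum[symmetric]) auto
  have kapB: "B.kap 0 h = (\<Sum>q\<in>W. B.eps 0 q * ind (snd (Y q) > h))" for h
    unfolding B.kap_def W_def using T01 sndB by (subst B.win_sum[symmetric]) auto
  have netA: "(\<Sum>q'\<in>W. A.eps 0 q') = 1"
    using A.win_sum[of "-T0" 0 T0 "\<lambda>_. 1"] T01 A.net[of 0] unfolding W_def by simp
  have netB: "(\<Sum>q\<in>W. B.eps 0 q) = 1"
    using B.win_sum[of "-T0" 0 T0 "\<lambda>_. 1"] T01 B.net[of 0] unfolding W_def by simp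
  have S1: "(\<Sum>q\<in>W. B.eps 0 q * A.kap 0 (snd (Y q))) = 0"
  proof (rule sum.neutral, rule ballI)
    fix q assume "q \<in> W"
    show "B.eps 0 q * A.kap 0 (snd (Y q)) = 0"
    proof (cases "B.eps 0 q = 0")
      case False
      then have "(0, snd (B q)) \<in> range B" by (rule B.left_end)
      then have "A.kapP (0, snd (B q)) = 0" by (rule kA)
      then show ?thesis unfolding A.kapP_def sndB by simp
    qed simp
  qed
  have S2: "(\<Sum>q'\<in>W. A.eps 0 q' * B.kap 0 (snd (Y q'))) = 0"
  proof (rule sum.neutral, rule ballI)
    fix q assume "q \<in> W"
    show "A.eps 0 q * B.kap 0 (snd (Y q)) = 0"
    proof (cases "A.eps 0 q = 0")
      case False
      then have "(0, snd (Y q)) \<in> range Y" by (rule A.left_end)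
      then have "B.kapP (0, snd (Y q)) = 0" by (rule kB)
      then show ?thesis unfolding B.kapP_def by simp
    qed simp
  qed
  have E1: "(\<Sum>q\<in>W. B.eps 0 q * A.kap 0 (snd (Y q))) =
        (\<Sum>q\<in>W. \<Sum>q'\<in>W. B.eps 0 q * A.eps 0 q' * ind (snd (Y q') > snd (Y q)))"
    unfolding kapA by (simp add: sum_distrib_left mult.assoc)
  have E2: "(\<Sum>q'\<in>W. A.eps 0 q' * B.kap 0 (snd (Y q'))) =
        (\<Sum>q\<in>W. \<Sum>q'\<in>W. B.eps 0 q * A.eps 0 q' * ind (snd (Y q) > snd (Y q')))"
    unfolding kapB by (subst sum.swap) (simp add: sum_distrib_left mult.commute mult.left_commute)
  have E3: "B.eps 0 q * A.eps 0 q' * ind (snd (Y q') > snd (Y q)) + B.eps 0 q * A.eps 0 q' * ind (snd (Y q) > snd (Y q'))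
       = B.eps 0 q * A.eps 0 q'" for q q'
  proof (cases "B.eps 0 q = 0 \<or> A.eps 0 q' = 0")
    case False
    then have "(0, snd (B q)) \<in> range B" "(0, snd (Y q')) \<in> range Y"
      using B.left_end A.left_end by auto
    then have "snd (Y q) \<noteq> snd (Y q')" using disj sndB by (metis imageE)
    then show ?thesis unfolding ind_def by (auto simp: algebra_simps)
  qed auto
  have "(\<Sum>q\<in>W. \<Sum>q'\<in>W. B.eps 0 q * A.eps 0 q') =
     (\<Sum>q\<in>W. \<Sum>q'\<in>W. B.eps 0 q * A.eps 0 q' * ind (snd (Y q') > snd (Y q)) + B.eps 0 q * A.eps 0 q' * ind (snd (Y q) > snd (Y q')))"
    using E3 by simp
  also have "\<dots> = (\<Sum>q\<in>W. \<Sum>q'\<in>W. B.eps 0 q * A.eps 0 q' * ind (snd (Y q') > snd (Y q))) +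
       (\<Sum>q\<in>W. \<Sum>q'\<in>W. B.eps 0 q * A.eps 0 q' * ind (snd (Y q) > snd (Y q')))"
    by (simp add: sum.distrib)
  also have "\<dots> = 0" using S1 S2 E1 E2 by simp
  finally have "(\<Sum>q\<in>W. \<Sum>q'\<in>W. B.eps 0 q * A.eps 0 q') = 0" .
  moreover have "(\<Sum>q\<in>W. \<Sum>q'\<in>W. B.eps 0 q * A.eps 0 q') = 1"
    by (simp add: sum_distrib_left[symmetric] sum_distrib_right[symmetric] netA netB)
  ultimately show False by simp
qed

lemma periodic_shift':
  fixes Y :: "int \<Rightarrow> int \<times> int"
  assumes L: "L > 0" and M: "M \<noteq> 0" and st: "\<And>q. unit_step (Y q) (Y (q+1))"
    and pr: "\<And>q. Y (q + L) = (fst (Y q) + M, snd (Y q))"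
  shows "\<exists>q1 q2. Y q1 = (fst (Y q2) + s, snd (Y q2))"
proof (cases "M > 0")
  case True
  have "pwalk Y L M" using L True st pr by unfold_locales auto
  then show ?thesis by (rule periodic_shift)
next
  case False
  define Y' where "Y' q = (- fst (Y q), snd (Y q))" for q
  have "pwalk Y' L (-M)"
  proof
    show "L > 0" "- M > 0" using L M False by auto
    fix q
    show "unit_step (Y' q) (Y' (q+1))" using st[of q] unfolding unit_step_iff Y'_def by auto
    show "Y' (q + L) = (fst (Y' q) + - M, snd (Y' q))" using pr[of q] unfolding Y'_def by auto
  qed
  then obtain q1 q2 where "Y' q1 = (fst (Y' q2) + (-s), snd (Y' q2))" using periodic_shift by blast
  then have "Y q1 = (fst (Y q2) + s, snd (Y q2))" unfolding Y'_def by (auto simp: prod_eq_iff)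
  then show ?thesis by blast
qed

lemma unit_step_shift: "unit_step (fst p + a, snd p + b) (fst q + a, snd q + b) = unit_step p q"
  unfolding unit_step_iff by auto

lemma nat_mod_lt: assumes "(L::int) = int n" "L > 0" shows "nat (q mod L) < n"
proof -
  have "q mod L < L" "0 \<le> q mod L" using assms(2) by auto
  then show ?thesis using assms(1) by linarith
qed

lemma uct:
  assumes W: "is_walk ws" and a0: "a0 < length ws" and b0: "b0 < length ws"
    and g0: "gdiff (ws!a0) (ws!b0) = (t*c, 0)" and t: "t \<noteq> 0" and c: "c \<noteq> 0"
  shows "\<exists>a b. a < length ws \<and> b < length ws \<and> gdiff (ws!a) (ws!b) = (c, 0)"
proof (rule ccontr)
  assume nc: "\<not> ?thesis"
  define P where "P = (\<lambda>(i, i'). i < i' \<and> i' < length ws \<and> (\<exists>t. t \<noteq> 0 \<and> gdiff (ws!i') (ws!i) = (t*c, (0::int))))"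
  have "P (b0, a0) \<or> P (a0, b0)"
  proof (cases "a0 < b0")
    case True
    have "gdiff (ws!b0) (ws!a0) = ((-t)*c, 0)" using g0 unfolding gdiff_def by auto
    then have "P (a0, b0)" using True b0 t unfolding P_def by (auto intro!: exI[of _ "-t"])
    then show ?thesis by simp
  next
    case False
    have "a0 \<noteq> b0" using g0 t c unfolding gdiff_def by auto
    then show ?thesis using False a0 g0 t unfolding P_def by auto
  qed
  then obtain pr where "P pr" by blast
  then obtain mp where mpP: "P mp" and mpmin: "\<And>y. P y \<Longrightarrow> snd mp - fst mp \<le> snd y - fst y"
    using ex_has_least_nat[of P pr "\<lambda>p. snd p - fst p"] by blast
  obtain i i' where mp: "mp = (i, i')" by (metis prod.collapse)
  obtain t1 where ii: "i < i'" "i' < length ws" and t1: "t1 \<noteq> 0" and g1: "gdiff (ws!i') (ws!i) = (t1*c, 0)"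
    using mpP unfolding mp P_def by auto
  have min: "i' - i \<le> j' - j" if "P (j, j')" for j j' using mpmin[OF that] mp by simp
  have t1n: "t1 \<noteq> 1 \<and> t1 \<noteq> -1"
  proof
    show "t1 \<noteq> 1" using nc g1 ii by auto
    show "t1 \<noteq> -1"
    proof
      assume "t1 = -1"
      then have "gdiff (ws!i) (ws!i') = (c, 0)" using g1 unfolding gdiff_def by auto
      then show False using nc ii by auto
    qed
  qed
  define Lq where "Lq = int (i' - i)"
  have Lq: "Lq > 0" unfolding Lq_def using ii by simp
  define V where "V = t1 * c"
  have wsi': "ws!i' = (fst (ws!i) + V, snd (ws!i))" using g1 unfolding gdiff_def V_def by (auto simp: prod_eq_iff)
  define Y where "Y q = (fst (ws ! (i + nat (q mod Lq))) + (q div Lq) * V, snd (ws ! (i + nat (q mod Lq))))" for q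
  have wst: "unit_step (ws!j) (ws!(j+1))" if "j + 1 < length ws" for j
    using W that unfolding is_walk_def by auto
  have st: "unit_step (Y q) (Y (q+1))" for q
  proof -
    define r where "r = q mod Lq"
    have r: "0 \<le> r" "r < Lq" unfolding r_def using Lq by auto
    have qd: "q = r + (q div Lq) * Lq" unfolding r_def by simp
    show ?thesis
    proof (cases "r + 1 < Lq")
      case True
      define k where "k = q div Lq"
      have e: "q + 1 = (r + 1) + k * Lq" using qd unfolding k_def by simp
      have d1: "((r+1) + k*Lq) div Lq = k + (r+1) div Lq" by (rule div_mult_self1) (use Lq in simp)
      have d2: "(r+1) div Lq = 0" by (rule div_pos_pos_trivial) (use r True in auto)
      have m1: "((r+1) + k*Lq) mod Lq = (r+1) mod Lq" by (rule mod_mult_self1)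
      have m2: "(r+1) mod Lq = r + 1" by (rule mod_pos_pos_trivial) (use r True in auto)
      have "(q + 1) div Lq = k" by (simp only: e d1 d2)
      moreover have "(q+1) mod Lq = r + 1" by (simp only: e m1 m2)
      ultimately have "(q + 1) div Lq = q div Lq" "(q+1) mod Lq = r + 1" unfolding k_def by simp_all
      moreover have "nat (r + 1) = nat r + 1" using r by simp
      moreover have "i + nat r + 1 < length ws" using True ii Lq_def r by linarith
      ultimately show ?thesis using wst[of "i + nat r"] unit_step_shift[of "ws!(i + nat r)" "q div Lq * V" 0 "ws!(i + nat r+1)"]
        unfolding Y_def r_def by simp
    next
      case False
      then have rL: "r + 1 = Lq" using r by simp
      define k where "k = q div Lq"
      have e: "q + 1 = 0 + (k + 1) * Lq" using qd rL unfolding k_def by (simp add: algebra_simps)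
      have d1: "(0 + (k+1)*Lq) div Lq = (k+1) + 0 div Lq" by (rule div_mult_self1) (use Lq in simp)
      have m1: "(0 + (k+1)*Lq) mod Lq = 0 mod Lq" by (rule mod_mult_self1)
      have "(q + 1) div Lq = k + 1" by (simp only: e d1) simp
      moreover have "(q+1) mod Lq = 0" by (simp only: e m1) simp
      ultimately have "(q + 1) div Lq = q div Lq + 1" "(q+1) mod Lq = 0" unfolding k_def by simp_all
      moreover have "i + nat r = i' - 1" using rL Lq_def ii by linarith
      moreover have "unit_step (ws!(i'-1)) (ws!i')" using wst[of "i'-1"] ii by simp
      ultimately show ?thesis
        using unit_step_shift[of "ws!(i'-1)" "q div Lq * V" 0 "ws!i'"] wsi'
        unfolding Y_def r_def by (simp add: algebra_simps)
    qed
  qed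
  have pr: "Y (q + Lq) = (fst (Y q) + V, snd (Y q))" for q
  proof -
    have d: "(q + Lq) div Lq = q div Lq + 1" using Lq by (metis div_add_self2 less_irrefl)
    have m: "(q + Lq) mod Lq = q mod Lq" by simp
    show ?thesis unfolding Y_def d m by (simp add: algebra_simps)
  qed
  have V0: "V \<noteq> 0" using t1 c unfolding V_def by simp
  obtain q1 q2 where q12: "Y q1 = (fst (Y q2) + c, snd (Y q2))"
    using periodic_shift'[OF Lq V0 st pr] by blast
  define a where "a = i + nat (q1 mod Lq)"
  define b where "b = i + nat (q2 mod Lq)"
  have "nat (q1 mod Lq) < i' - i" "nat (q2 mod Lq) < i' - i" using nat_mod_lt[OF Lq_def Lq] by auto
  then have ab: "i \<le> a" "a < i'" "i \<le> b" "b < i'" unfolding a_def b_def by auto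
  define m where "m = q2 div Lq - q1 div Lq"
  have gab: "gdiff (ws!a) (ws!b) = ((1 + m * t1) * c, 0)"
    using q12 unfolding Y_def a_def b_def gdiff_def m_def V_def by (auto simp: algebra_simps)
  have t2: "1 + m * t1 \<noteq> 0"
  proof
    assume "1 + m * t1 = 0"
    then have "(-m) * t1 = 1" by simp
    then have "(-m = 1 \<and> t1 = 1) \<or> (-m = -1 \<and> t1 = -1)" by (simp only: zmult_eq_1_iff)
    then show False using t1n by auto
  qed
  have "a \<noteq> b" using gab t2 c unfolding gdiff_def by auto
  then show False
  proof (cases "a < b")
    case True
    have g1: "fst (ws!a) - fst (ws!b) = (1 + m*t1) * c" "snd (ws!a) = snd (ws!b)"
      using gab unfolding gdiff_def by auto
    have "gdiff (ws!b) (ws!a) = ((- (1 + m*t1)) * c, 0)" unfolding gdiff_def using g1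
      by (simp only: prod_eq_iff fst_conv snd_conv mult_minus_left) linarith
    then have "P (a, b)" unfolding P_def using True ab ii t2 by (auto intro!: exI[of _ "- (1 + m*t1)"])
    then show False using min[of a b] ab by auto
  next
    case False
    then have "b < a" using \<open>a \<noteq> b\<close> by simp
    then have "P (b, a)" unfolding P_def using gab ab ii t2 by (auto intro!: exI[of _ "1 + m*t1"])
    then show False using min[of b a] ab by auto
  qed
qed

lemma small_mult: assumes "(k::int) > 0" "\<bar>k*y\<bar> < c*k" shows "\<bar>y\<bar> < c"
proof (rule ccontr)
  assume "\<not> \<bar>y\<bar> < c"
  then have "c \<le> \<bar>y\<bar>" by simp
  then have "k * c \<le> k * \<bar>y\<bar>" using assms(1) by (intro mult_left_mono) auto
  then show False using assms by (simp add: abs_mult mult.commute)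
qed

definition dirs :: "(int \<times> int) set" where "dirs = {(1,0),(-1,0),(0,1),(0,-1)}"

lemma abs_rmul: assumes "r = 0 \<or> (ux, uy) \<in> dirs" "(r::int) \<ge> 0"
  shows "\<bar>r*ux\<bar> \<le> r" "\<bar>r*uy\<bar> \<le> r"
  using assms unfolding dirs_def by (auto simp: abs_mult)

lemma rounding:
  fixes k r r' e ux uy vx vy t Dy :: int
  assumes k: "k \<ge> 1" and r: "0 \<le> r" "r < k" and r': "0 \<le> r'" "r' < k" and e: "\<bar>e\<bar> < k"
    and hu: "r = 0 \<or> (ux, uy) \<in> dirs" and hv: "r' = 0 \<or> (vx, vy) \<in> dirs"
    and ex: "k*t + r'*vx - r*ux = e" and ey: "k*Dy + r'*vy - r*uy = 0"
  shows "(t = 0 \<and> Dy = 0) \<or> (r' > 0 \<and> t + vx = 0 \<and> Dy + vy = 0) \<or> (r > 0 \<and> t - ux = 0 \<and> Dy - uy = 0)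
     \<or> (r > 0 \<and> r' > 0 \<and> t + vx - ux = 0 \<and> Dy + vy - uy = 0)"
proof -
  have b: "\<bar>r*ux\<bar> \<le> r" "\<bar>r*uy\<bar> \<le> r" using abs_rmul[OF hu r(1)] by auto
  have b': "\<bar>r'*vx\<bar> \<le> r'" "\<bar>r'*vy\<bar> \<le> r'" using abs_rmul[OF hv r'(1)] by auto
  have "k*Dy = r*uy - r'*vy" using ey by linarith
  moreover have "\<bar>r*uy - r'*vy\<bar> \<le> \<bar>r*uy\<bar> + \<bar>r'*vy\<bar>" by (rule abs_triangle_ineq4)
  ultimately have "\<bar>k*Dy\<bar> < 2*k" using b(2) b'(2) r(2) r'(2) by simp
  then have "\<bar>Dy\<bar> < 2" using small_mult[of k Dy 2] k by linarith
  then have "-2 < Dy" "Dy < 2" by (simp_all add: abs_less_iff)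
  then have Dy: "Dy = -1 \<or> Dy = 0 \<or> Dy = 1" by linarith
  have "k*t = e + r*ux - r'*vx" using ex by linarith
  moreover have "\<bar>e + r*ux - r'*vx\<bar> \<le> \<bar>e\<bar> + \<bar>r*ux\<bar> + \<bar>r'*vx\<bar>"
    using abs_triangle_ineq[of e "r*ux"] abs_triangle_ineq4[of "e + r*ux" "r'*vx"] by linarith
  ultimately have "\<bar>k*t\<bar> < 3*k" using b(1) b'(1) r(2) r'(2) e by simp
  then have "\<bar>t\<bar> < 3" using small_mult[of k t 3] k by linarith
  then have "-3 < t" "t < 3" by (simp_all add: abs_less_iff)
  then have t: "t = -2 \<or> t = -1 \<or> t = 0 \<or> t = 1 \<or> t = 2" by linarith
  have hu': "r = 0 \<or> (ux = 1 \<and> uy = 0) \<or> (ux = -1 \<and> uy = 0) \<or> (ux = 0 \<and> uy = 1) \<or> (ux = 0 \<and> uy = -1)"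
    using hu unfolding dirs_def by auto
  have hv': "r' = 0 \<or> (vx = 1 \<and> vy = 0) \<or> (vx = -1 \<and> vy = 0) \<or> (vx = 0 \<and> vy = 1) \<or> (vx = 0 \<and> vy = -1)"
    using hv unfolding dirs_def by auto
  from hu' hv' Dy t show ?thesis
    using ex ey k r r' e by (elim disjE conjE; simp; linarith)
qed

definition rpt :: "nat \<Rightarrow> (int \<times> int) list \<Rightarrow> nat \<Rightarrow> int \<times> int" where
  "rpt k zs j = (let i = j div k; r = int (j mod k); P = zs!i; Q = zs!(i+1) in
      (int k * fst P + r * (fst Q - fst P), int k * snd P + r * (snd Q - snd P)))"

definition refine :: "nat \<Rightarrow> (int \<times> int) list \<Rightarrow> (int \<times> int) list" where
  "refine k zs = map (rpt k zs) [0..<k * (length zs - 1) + 1]"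

lemma refine_len: "length (refine k zs) = k * (length zs - 1) + 1"
  unfolding refine_def by simp

lemma refine_nth: "j < length (refine k zs) \<Longrightarrow> refine k zs ! j = rpt k zs j"
  unfolding refine_def by (simp del: upt_Suc)

lemma unit_step_diff: "unit_step p q \<longleftrightarrow> (fst q - fst p, snd q - snd p) \<in> dirs"
  unfolding unit_step_iff dirs_def by auto

lemma refine_walk:
  assumes W: "is_walk zs" and k: "k \<ge> 1"
  shows "is_walk (refine k zs)"
  unfolding is_walk_def
proof (intro conjI allI impI)
  show "refine k zs \<noteq> []" unfolding refine_def by simp
next
  fix j assume j: "Suc j < length (refine k zs)"
  define m where "m = length zs"
  have m: "m \<ge> 1" using W unfolding is_walk_def m_def by (cases zs) auto
  have jl: "j < k * (m - 1)" using j refine_len[of k zs] unfolding m_def by simp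
  define i where "i = j div k"
  have il: "i < m - 1" using jl k unfolding i_def by (simp add: div_less_iff_less_mult mult.commute)
  have wi: "unit_step (zs!i) (zs!(i+1))" using W il unfolding is_walk_def m_def by auto
  have nth1: "refine k zs ! j = rpt k zs j" "refine k zs ! Suc j = rpt k zs (Suc j)"
    using j by (auto intro!: refine_nth)
  show "unit_step (refine k zs ! j) (refine k zs ! Suc j)"
  proof (cases "Suc (j mod k) = k")
    case False
    have "Suc j div k = i" "Suc j mod k = Suc (j mod k)" using False unfolding i_def by (simp_all add: div_Suc mod_Suc)
    then show ?thesis using wi unfolding nth1 rpt_def Let_def unit_step_diff i_def
      by (simp add: algebra_simps)
  next
    case True
    have "Suc j div k = Suc i" "Suc j mod k = 0" using True unfolding i_def by (simp_all add: div_Suc mod_Suc)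
    moreover have jm: "int (j mod k) = int k - 1" using True by linarith
    ultimately show ?thesis using wi unfolding nth1 rpt_def Let_def unit_step_diff i_def
      by (simp add: jm algebra_simps)
  qed
qed

lemma rpt_mult: "k \<ge> 1 \<Longrightarrow> rpt k zs (k * i) = (int k * fst (zs!i), int k * snd (zs!i))"
  unfolding rpt_def Let_def by simp

lemma key_lemma:
  fixes n d k :: nat
  assumes k: "k \<ge> 1" and n: "n \<ge> 1"
    and lo: "int k * int d - int k < int n" and hi: "int n < int k * int d + int k"
  shows "\<not> avoidable n d"
proof
  assume "avoidable n d"
  then obtain zs r s where W: "is_walk zs" and rs: "r < length zs" "s < length zs"
    and g: "gdiff (zs ! r) (zs ! s) = (int n, 0)"
    and nod: "\<And>t u. t < length zs \<Longrightarrow> u < length zs \<Longrightarrow> gdiff (zs ! t) (zs ! u) \<noteq> (int d, 0)"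
    unfolding avoidable_def by blast
  define m where "m = length zs"
  have m: "m \<ge> 1" using W unfolding is_walk_def m_def by (cases zs) auto
  define ws where "ws = refine k zs"
  have Wws: "is_walk ws" unfolding ws_def using refine_walk[OF W k] .
  have lws: "length ws = k * (m - 1) + 1" unfolding ws_def m_def by (rule refine_len)
  have kr: "k * r < length ws" "k * s < length ws"
    using rs lws m unfolding m_def by (auto intro!: le_imp_less_Suc mult_le_mono2)
  have "gdiff (ws ! (k*r)) (ws ! (k*s)) = (int k * int n, 0)"
    using g kr refine_nth[of "k*r" k zs] refine_nth[of "k*s" k zs] rpt_mult[OF k] unfolding ws_def gdiff_def
    by (auto simp: algebra_simps)
  then obtain a b where ab: "a < length ws" "b < length ws" and gab: "gdiff (ws!a) (ws!b) = (int n, 0)"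
    using uct[OF Wws kr, of "int k" "int n"] k n by auto
  define i where "i = a div k"
  define i' where "i' = b div k"
  define ra where "ra = int (a mod k)"
  define rb where "rb = int (b mod k)"
  have km: "k * (m - 1) + 1 \<le> k * m" using k m by (cases m) auto
  have il: "i < m" "i' < m" using ab lws k km unfolding i_def i'_def
    by (auto simp: div_less_iff_less_mult mult.commute)
  have ra: "0 \<le> ra" "ra < int k" unfolding ra_def using k by auto
  have rb: "0 \<le> rb" "rb < int k" unfolding rb_def using k by auto
  have ia: "ra > 0 \<Longrightarrow> i + 1 < m"
  proof -
    assume "ra > 0"
    then have "a mod k > 0" unfolding ra_def by simp
    moreover have "a = k * i + a mod k" unfolding i_def by simp
    ultimately have "k * i < k * (m - 1)" using ab lws by linarith
    then show "i + 1 < m" using m by (simp, linarith)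
  qed
  have ib: "rb > 0 \<Longrightarrow> i' + 1 < m"
  proof -
    assume "rb > 0"
    then have "b mod k > 0" unfolding rb_def by simp
    moreover have "b = k * i' + b mod k" unfolding i'_def by simp
    ultimately have "k * i' < k * (m - 1)" using ab lws by linarith
    then show "i' + 1 < m" using m by (simp, linarith)
  qed
  define Q where "Q = zs!i" define Q2 where "Q2 = zs!(i+1)"
  define P where "P = zs!i'" define P2 where "P2 = zs!(i'+1)"
  have wsa: "ws!a = (int k * fst Q + ra * (fst Q2 - fst Q), int k * snd Q + ra * (snd Q2 - snd Q))"
    using refine_nth[of a k zs] ab unfolding ws_def rpt_def Let_def Q_def Q2_def i_def ra_def by simp
  have wsb: "ws!b = (int k * fst P + rb * (fst P2 - fst P), int k * snd P + rb * (snd P2 - snd P))"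
    using refine_nth[of b k zs] ab unfolding ws_def rpt_def Let_def P_def P2_def i'_def rb_def by simp
  have hv: "ra = 0 \<or> (fst Q2 - fst Q, snd Q2 - snd Q) \<in> dirs"
  proof (cases "ra = 0")
    case False
    then have "i + 1 < m" using ia ra by simp
    then have "unit_step Q Q2" using W unfolding is_walk_def Q_def Q2_def m_def by auto
    then show ?thesis unfolding unit_step_diff by simp
  qed simp
  have hu: "rb = 0 \<or> (fst P2 - fst P, snd P2 - snd P) \<in> dirs"
  proof (cases "rb = 0")
    case False
    then have "i' + 1 < m" using ib rb by simp
    then have "unit_step P P2" using W unfolding is_walk_def P_def P2_def m_def by auto
    then show ?thesis unfolding unit_step_diff by simp
  qed simp
  define t where "t = fst Q - fst P - int d"
  define Dy where "Dy = snd Q - snd P"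
  define e where "e = int n - int k * int d"
  have ex: "int k * t + ra * (fst Q2 - fst Q) - rb * (fst P2 - fst P) = e"
    using gab unfolding wsa wsb gdiff_def t_def e_def by (simp add: algebra_simps)
  have ey: "int k * Dy + ra * (snd Q2 - snd Q) - rb * (snd P2 - snd P) = 0"
    using gab unfolding wsa wsb gdiff_def Dy_def by (simp add: algebra_simps)
  have e: "\<bar>e\<bar> < int k" unfolding e_def using lo hi by linarith
  have k1: "int k \<ge> 1" using k by simp
  have R: "(t = 0 \<and> Dy = 0) \<or> (ra > 0 \<and> t + (fst Q2 - fst Q) = 0 \<and> Dy + (snd Q2 - snd Q) = 0)
      \<or> (rb > 0 \<and> t - (fst P2 - fst P) = 0 \<and> Dy - (snd P2 - snd P) = 0)
      \<or> (rb > 0 \<and> ra > 0 \<and> t + (fst Q2 - fst Q) - (fst P2 - fst P) = 0 \<and> Dy + (snd Q2 - snd Q) - (snd P2 - snd P) = 0)"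
    by (rule rounding[OF k1 rb ra e hu hv ex ey])
  then show False
  proof (elim disjE conjE)
    assume "t = 0" "Dy = 0"
    then have "gdiff (zs!i) (zs!i') = (int d, 0)" unfolding gdiff_def t_def Dy_def Q_def P_def by simp
    then show False using nod il unfolding m_def by blast
  next
    assume h: "ra > 0" "t + (fst Q2 - fst Q) = 0" "Dy + (snd Q2 - snd Q) = 0"
    then have "gdiff (zs!(i+1)) (zs!i') = (int d, 0)" unfolding gdiff_def t_def Dy_def Q2_def Q_def P_def by simp
    then show False using nod il ia h(1) unfolding m_def by blast
  next
    assume h: "rb > 0" "t - (fst P2 - fst P) = 0" "Dy - (snd P2 - snd P) = 0"
    then have "gdiff (zs!i) (zs!(i'+1)) = (int d, 0)" unfolding gdiff_def t_def Dy_def P2_def Q_def P_def by simp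
    then show False using nod il ib h(1) unfolding m_def by blast
  next
    assume h: "rb > 0" "ra > 0" "t + (fst Q2 - fst Q) - (fst P2 - fst P) = 0" "Dy + (snd Q2 - snd Q) - (snd P2 - snd P) = 0"
    then have "gdiff (zs!(i+1)) (zs!(i'+1)) = (int d, 0)" unfolding gdiff_def t_def Dy_def P2_def Q2_def Q_def P_def by simp
    then show False using nod ia ib h(1,2) unfolding m_def by blast
  qed
qed

lemma bound_least:
  fixes n d :: nat
  assumes n: "n \<ge> 1" "n \<notin> {1,2,4,6,12}" and d1: "d \<ge> 1" and nd: "\<not> d dvd n"
    and below: "\<And>j. 1 \<le> j \<Longrightarrow> j < d \<Longrightarrow> j dvd n"
  shows "d * (d + 1) \<le> 2 * n"
proof -
  have d2: "d \<ge> 2" using d1 nd by (cases "d = 1") auto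
  have nn: "n \<noteq> 1" "n \<noteq> 2" "n \<noteq> 4" "n \<noteq> 6" "n \<noteq> 12" using n by auto
  consider "d = 2" | "d = 3" | "d = 4" | "d = 5" | "d = 6" | "d \<ge> 7" using d2 by linarith
  then show ?thesis
  proof cases
    case 1
    have "\<not> 2 dvd n" using nd 1 by simp
    then show ?thesis unfolding 1 using nn n(1) by presburger
  next
    case 2
    have "\<not> 3 dvd n" "2 dvd n" using nd 2 below[of 2] by simp_all
    then show ?thesis unfolding 2 using nn n(1) by presburger
  next
    case 3
    have "\<not> 4 dvd n" "2 dvd n" "3 dvd n" using nd 3 below[of 2] below[of 3] by simp_all
    then show ?thesis unfolding 3 using nn n(1) by presburger
  next
    case 4
    have "\<not> 5 dvd n" "3 dvd n" "4 dvd n" using nd 4 below[of 3] below[of 4] by simp_all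
    then show ?thesis unfolding 4 using nn n(1) by presburger
  next
    case 5
    have "\<not> 6 dvd n" "2 dvd n" "3 dvd n" using nd 5 below[of 2] below[of 3] by simp_all
    then show ?thesis unfolding 5 using nn n(1) by presburger
  next
    case 6
    define e where "e = d - 2"
    have e: "d = e + 2" "e \<ge> 5" using 6 unfolding e_def by auto
    have "Suc e dvd n" "e dvd n" using below[of "Suc e"] below[of e] e by auto
    moreover have "coprime (Suc e) e" by simp
    ultimately have "Suc e * e dvd n" by (rule divides_mult)
    then have le: "Suc e * e \<le> n" using n(1) by (intro dvd_imp_le) auto
    have ee: "5 * e \<le> e * e" using e(2) by (intro mult_right_mono) auto
    have x1: "d * (d+1) = e*e + 5*e + 6" unfolding e(1) by (simp add: algebra_simps)
    have x2: "2 * (Suc e * e) = 2*(e*e) + 2*e" by simp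
    have "d * (d+1) \<le> 2 * (Suc e * e)" unfolding x1 x2 using ee e(2) by linarith
    then show ?thesis using le by linarith
  qed
qed

lemma exists_witness:
  fixes n :: nat
  assumes n: "n \<ge> 1" "n \<notin> {1,2,4,6,12}"
  shows "\<exists>d k. d \<ge> 1 \<and> \<not> d dvd n \<and> k \<ge> 1 \<and> int k * int d - int k < int n \<and> int n < int k * int d + int k"
proof -
  define d where "d = (LEAST d. d \<ge> 1 \<and> \<not> d dvd n)"
  have ex: "Suc n \<ge> 1 \<and> \<not> Suc n dvd n" using n by (auto dest: dvd_imp_le)
  have dP: "d \<ge> 1 \<and> \<not> d dvd n" unfolding d_def by (rule LeastI[of _ "Suc n"], rule ex)
  have below: "j dvd n" if "1 \<le> j" "j < d" for j
    using not_less_Least[of j "\<lambda>d. d \<ge> 1 \<and> \<not> d dvd n"] that unfolding d_def by auto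
  have B: "d * (d + 1) \<le> 2 * n" using bound_least[OF n _ _ below] dP by auto
  define q where "q = n div d"
  define r where "r = n mod d"
  have nqr: "n = q * d + r" unfolding q_def r_def by simp
  have r0: "r > 0" using dP unfolding r_def by (simp add: dvd_eq_mod_eq_0)
  have rd: "r < d" using dP unfolding r_def by simp
  have q2: "d \<le> 2 * q"
  proof (rule ccontr)
    assume "\<not> d \<le> 2 * q"
    then have "2 * q + 1 \<le> d" by simp
    then have "(2 * q + 2) * d \<le> (d + 1) * d" by (intro mult_right_mono) auto
    moreover have "2 * n < (2 * q + 2) * d" using nqr rd by (simp add: algebra_simps)
    ultimately show False using B by (simp add: algebra_simps)
  qed
  show ?thesis
  proof (cases "r < q")
    case True
    show ?thesis
      by (rule exI[of _ d], rule exI[of _ q]) (use dP True r0 nqr in \<open>auto simp: algebra_simps\<close>)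
  next
    case False
    have "int (q+1) * int d - int (q+1) < int n" using nqr False q2 by (simp add: algebra_simps)
    moreover have "int n < int (q+1) * int d + int (q+1)" using nqr rd by (simp add: algebra_simps)
    ultimately show ?thesis using dP by (intro exI[of _ d] exI[of _ "q+1"]) auto
  qed
qed

fun chk :: "(int \<times> int) list \<Rightarrow> bool" where
  "chk (p # q # r) = (unit_step p q \<and> chk (q # r))"
| "chk _ = True"

lemma chk_walk: "zs \<noteq> [] \<Longrightarrow> chk zs \<Longrightarrow> is_walk zs"
proof (induction zs rule: chk.induct)
  case (1 p q r)
  have IH: "is_walk (q # r)" using 1 by simp
  show ?case unfolding is_walk_def
  proof (intro conjI allI impI)
    show "p # q # r \<noteq> []" by simp
    fix j assume j: "Suc j < length (p # q # r)"
    show "unit_step ((p # q # r) ! j) ((p # q # r) ! Suc j)"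
    proof (cases j)
      case 0 then show ?thesis using 1 by simp
    next
      case (Suc j') then show ?thesis using IH j unfolding is_walk_def by auto
    qed
  qed
next
  case ("2_1") then show ?case by simp
next
  case ("2_2" v) then show ?case unfolding is_walk_def by simp
qed

lemma avoid_from_list:
  assumes "zs \<noteq> []" "chk zs" "hd zs = (0,0)" "last zs = (int n, 0)"
    "list_all (\<lambda>p. list_all (\<lambda>q. gdiff p q \<noteq> (int d, 0)) zs) zs"
  shows "avoidable n d"
  unfolding avoidable_def
proof (intro exI conjI allI impI)
  show "is_walk zs" using assms(1,2) by (rule chk_walk)
  show "length zs - 1 < length zs" "0 < length zs" using assms(1) by auto
  show "gdiff (zs ! (length zs - 1)) (zs ! 0) = (int n, 0)"
    using assms(1,3,4) by (simp add: last_conv_nth hd_conv_nth gdiff_def)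
  fix t u assume "t < length zs" "u < length zs"
  then show "gdiff (zs ! t) (zs ! u) \<noteq> (int d, 0)"
    using assms(5) by (simp add: list_all_iff)
qed

lemma avoid_straight: assumes "n < d" shows "avoidable n d"
  unfolding avoidable_def
proof (intro exI conjI allI impI)
  let ?zs = "map (\<lambda>i. (int i, 0::int)) [0..<Suc n]"
  show "is_walk ?zs" unfolding is_walk_def unit_step_def gdiff_def by (auto simp del: upt_Suc)
  show "n < length ?zs" "0 < length ?zs" by auto
  show "gdiff (?zs ! n) (?zs ! 0) = (int n, 0)" unfolding gdiff_def by (simp del: upt_Suc)
  fix t u assume "t < length ?zs" "u < length ?zs"
  then show "gdiff (?zs ! t) (?zs ! u) \<noteq> (int d, 0)" using assms unfolding gdiff_def
    by (simp del: upt_Suc)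
qed

lemma avoid_4_3: "avoidable 4 3"
  by (rule avoid_from_list[of "[(0,0), (0,- 1), (0,- 2), (0,- 3), (0,- 4), (1,- 4), (2,- 4), (2,- 3), (2,- 2), (2,- 1), (2,0), (2,1), (3,1), (4,1), (4,0)]"]) (simp_all add: unit_step_def gdiff_def)

lemma avoid_6_4: "avoidable 6 4"
  by (rule avoid_from_list[of "[(0,0), (0,- 1), (0,- 2), (0,- 3), (0,- 4), (1,- 4), (2,- 4), (3,- 4), (3,- 3), (3,- 2), (3,- 1), (3,0), (3,1), (4,1), (5,1), (6,1), (6,0)]"]) (simp_all add: unit_step_def gdiff_def)

lemma avoid_6_5: "avoidable 6 5"
  by (rule avoid_from_list[of "[(0,0), (0,- 1), (0,- 2), (0,- 3), (0,- 4), (1,- 4), (2,- 4), (3,- 4), (4,- 4), (4,- 3), (4,- 2), (4,- 1), (4,0), (4,1), (5,1), (6,1), (6,0)]"]) (simp_all add: unit_step_def gdiff_def)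

lemma avoid_12_5: "avoidable 12 5"
  by (rule avoid_from_list[of "[(0,0), (0,1), (0,2), (1,2), (2,2), (3,2), (4,2), (4,1), (4,0), (4,- 1), (4,- 2), (4,- 3), (5,- 3), (6,- 3), (6,- 2), (6,- 1), (6,0), (6,1), (7,1), (8,1), (8,0), (8,- 1), (8,- 2), (8,- 3), (8,- 4), (9,- 4), (10,- 4), (11,- 4), (12,- 4), (12,- 3), (12,- 2), (12,- 1), (12,0)]"]) (simp_all add: unit_step_def gdiff_def)

lemma avoid_12_7: "avoidable 12 7"
  by (rule avoid_from_list[of "[(0,0), (0,- 1), (0,- 2), (0,- 3), (0,- 4), (1,- 4), (2,- 4), (3,- 4), (4,- 4), (5,- 4), (6,- 4), (6,- 3), (6,- 2), (6,- 1), (6,0), (6,1), (7,1), (8,1), (9,1), (10,1), (11,1), (12,1), (12,0)]"]) (simp_all add: unit_step_def gdiff_def)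

lemma avoid_12_8: "avoidable 12 8"
  by (rule avoid_from_list[of "[(0,0), (0,- 1), (0,- 2), (0,- 3), (0,- 4), (1,- 4), (2,- 4), (3,- 4), (4,- 4), (5,- 4), (6,- 4), (7,- 4), (7,- 3), (7,- 2), (7,- 1), (7,0), (7,1), (8,1), (9,1), (10,1), (11,1), (12,1), (12,0)]"]) (simp_all add: unit_step_def gdiff_def)

lemma avoid_12_9: "avoidable 12 9"
  by (rule avoid_from_list[of "[(0,0), (0,- 1), (0,- 2), (0,- 3), (0,- 4), (1,- 4), (2,- 4), (3,- 4), (4,- 4), (5,- 4), (6,- 4), (7,- 4), (8,- 4), (8,- 3), (8,- 2), (8,- 1), (8,0), (8,1), (9,1), (10,1), (11,1), (12,1), (12,0)]"]) (simp_all add: unit_step_def gdiff_def)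

lemma avoid_12_10: "avoidable 12 10"
  by (rule avoid_from_list[of "[(0,0), (0,- 1), (0,- 2), (0,- 3), (0,- 4), (1,- 4), (2,- 4), (3,- 4), (4,- 4), (5,- 4), (6,- 4), (7,- 4), (8,- 4), (9,- 4), (9,- 3), (9,- 2), (9,- 1), (9,0), (9,1), (10,1), (11,1), (12,1), (12,0)]"]) (simp_all add: unit_step_def gdiff_def)

lemma avoid_12_11: "avoidable 12 11"
  by (rule avoid_from_list[of "[(0,0), (0,- 1), (0,- 2), (0,- 3), (0,- 4), (1,- 4), (2,- 4), (3,- 4), (4,- 4), (5,- 4), (6,- 4), (7,- 4), (8,- 4), (9,- 4), (10,- 4), (10,- 3), (10,- 2), (10,- 1), (10,0), (10,1), (11,1), (12,1), (12,0)]"]) (simp_all add: unit_step_def gdiff_def)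

theorem mainTheorem8:
  fixes n :: nat
  assumes "n \<ge> 1"
  shows "A n = {d. d \<ge> 1 \<and> d dvd n} \<longleftrightarrow> n \<in> {1, 2, 4, 6, 12}"
proof
  assume h: "A n = {d. d \<ge> 1 \<and> d dvd n}"
  show "n \<in> {1, 2, 4, 6, 12}"
  proof (rule ccontr)
    assume "n \<notin> {1, 2, 4, 6, 12}"
    then obtain d k where d: "d \<ge> 1" "\<not> d dvd n" and k: "k \<ge> 1"
      and lo: "int k * int d - int k < int n" and hi: "int n < int k * int d + int k"
      using exists_witness[OF assms] by blast
    have "\<not> avoidable n d" by (rule key_lemma[OF k assms lo hi])
    then have "d \<in> A n" unfolding A_def using d by simp
    then show False using h d by simp
  qed
next
  assume hn: "n \<in> {1, 2, 4, 6, 12}"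
  show "A n = {d. d \<ge> 1 \<and> d dvd n}"
  proof (intro set_eqI iffI)
    fix d assume "d \<in> A n"
    then have d1: "d \<ge> 1" and na: "\<not> avoidable n d" unfolding A_def by auto
    show "d \<in> {d. 1 \<le> d \<and> d dvd n}"
    proof (rule ccontr)
      assume "d \<notin> {d. 1 \<le> d \<and> d dvd n}"
      then have ndv: "\<not> d dvd n" using d1 by auto
      show False
      proof (cases "n < d")
        case True then show False using avoid_straight na by blast
      next
        case False
        have hn': "n = 1 \<or> n = 2 \<or> n = 4 \<or> n = 6 \<or> n = 12" using hn by auto
        have "(n = 4 \<and> d = 3) \<or> (n = 6 \<and> d = 4) \<or> (n = 6 \<and> d = 5) \<or> (n = 12 \<and> d = 5) \<or>
              (n = 12 \<and> d = 7) \<or> (n = 12 \<and> d = 8) \<or> (n = 12 \<and> d = 9) \<or> (n = 12 \<and> d = 10) \<or>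
              (n = 12 \<and> d = 11)"
        proof -
          have "d \<le> 12" using hn' False by auto
          then have "d = 1 \<or> d = 2 \<or> d = 3 \<or> d = 4 \<or> d = 5 \<or> d = 6 \<or> d = 7 \<or> d = 8 \<or> d = 9 \<or>
              d = 10 \<or> d = 11 \<or> d = 12" using d1 by presburger
          then show ?thesis using hn' False ndv by (elim disjE; simp)
        qed
        then show False using na avoid_4_3 avoid_6_4 avoid_6_5 avoid_12_5 avoid_12_7 avoid_12_8
            avoid_12_9 avoid_12_10 avoid_12_11 by blast
      qed
    qed
  next
    fix d assume "d \<in> {d. 1 \<le> d \<and> d dvd n}"
    then have d1: "d \<ge> 1" and dv: "d dvd n" by auto
    then obtain k where nk: "n = d * k" by (auto elim: dvdE)
    have k: "k \<ge> 1" using nk assms by (cases k) auto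
    have "int k * int d - int k < int n" using nk k by (simp add: algebra_simps)
    moreover have "int n < int k * int d + int k" using nk k by (simp add: algebra_simps)
    ultimately have "\<not> avoidable n d" using key_lemma[OF k assms] by blast
    then show "d \<in> A n" unfolding A_def using d1 by simp
  qed
qed

end
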